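(* Let $s$ be a state of the transition system $\mathcal{S}_G$ of an event-driven multi-threaded program. If $P$ is a persistent set in $s$ with respect to the standard dependence relation, in which any two $\mathtt{post}$ transitions to the same event queue are dependent, then $P$ is a dependence-covering set in $s$ with respect to a valid dependence relation $D$ (as defined in the context).
   Context: Program model: a program has a finite set of threads, each with an unbounded FIFO event queue. $\mathtt{post}(t_1,e,t_2)$ executed by $t_1$ appends event $e$ to $t_2$'s queue (never blocks). Each thread dequeues the front event of its queue and runs its handler to completion, interleaved with other threads. A state is a triple $s=(l,g,q)$: $l$ is a partial map from threads to local states of their currently executing handlers, $g$ a global state (shared objects, not queues), $q$ maps each thread to the sequence of its pending events. A transition of thread $t$ is one visible operation (accessing an object shared by two threads or two handlers, or the first operation of a handler) followed by invisible operations of $t$ up to the next visible one; it is a deterministic partial function on states. The transition system $\mathcal{S}_G=(\mathcal{S},s_{\mathit{init}},\Delta)$ has $(s,s')\in\Delta$ iff $s'=r(s)$ for a transition $r$; $R$ is the set of transitions. $\mathit{next}(s,t)$ is the next transition of thread $t$ in $s$ and $\mathit{nextTrans}(s)$ the set of all threads' next transitions. Events $e,e'$ on the same thread $t$ may be reordered if some states have $q(t)=e\cdot w\cdot e'\cdot w'$ and $q'(t)=e'\cdot v\cdot e\cdot v'$. Standard dependence relation and persistent sets (Godefroid): the standard dependence relation is a reflexive symmetric relation $D_{std}\subseteq R\times R$ such that whenever $(r_1,r_2)\notin D_{std}$, for all states $s$: if $r_1$ is enabled at $s$ then $r_2$ is enabled at $s$ iff at $r_1(s)$, and if both are enabled at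 $s$ then $r_1(r_2(s))=r_2(r_1(s))$ (full states, including queues); here any two posts to the same event queue are treated as dependent. A set $P$ of transitions enabled at $s$ is persistent in $s$ if for every transition sequence $r_1\cdots r_n$ from $s$ in $\mathcal{S}_G$ with $r_i\notin P$ for all $i$, $r_n$ is independent (w.r.t. $D_{std}$) of every transition in $P$. Event-parallel system $\mathcal{P}_G$: same semantics as $\mathcal{S}_G$ except a thread may remove any event of its queue and spawn a fresh thread running its handler; $ep$ maps each transition of $\mathcal{S}_G$ to the corresponding transition of $\mathcal{P}_G$. A reflexive symmetric $D_P$ on transitions of $\mathcal{P}_G$ is a valid event-parallel dependence relation iff whenever $(r_1,r_2)\notin D_P$, for all states $s$: (i) if $r_1$ is enabled at $s$, then $r_2$ is enabled at $s$ iff at $r_1(s)$; (ii) if both are enabled at $s$ then $r_1(r_2(s))$ and $r_2(r_1(s))$ exist and agree on their local and global components (queues may differ). A reflexive symmetric $D\subseteq R\times R$ is a valid dependence relation iff for some such $D_P$, whenever $(r_1,r_2)\notin D$: if $r_1,r_2$ belong to handlers of two different events $e_1,e_2$ on the same thread then $e_1,e_2$ may be reordered and $(ep(r_1),ep(r_2))\notin D_P$; otherwise (i) and (ii) hold for all states of $\mathcal{S}_G$. (In particular all posts are independent under $D$.) Dependent means $(r_1,r_2)\in D$. Dependence-covering sequence and set (w.r.t. $D$): for $w=r_1\cdots r_n$ and $u=r'_1\cdots r'_m$ from the same state reaching $s_n$ and $s'_m$, with transition sets $R_w,R_u$: $u$ is a dependence-covering sequence of $w$ if $R_w\subseteq R_u$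 and for every dependent pair $r'_i,r'_j\in R_u$ with $i<j$, one holds: (1) both are executed in $w$ in the same relative order; (2) $r'_i$ is executed in $w$ and $r'_j\in\mathit{nextTrans}(s_n)$; (3) $r'_i$ is not executed in $w$, $r'_j\in\mathit{nextTrans}(s_n)$, and $w$ can be extended so that $r'_i$ executes before $r'_j$; (4) $r'_j\notin R_w\cup\mathit{nextTrans}(s_n)$. A non-empty set $L$ of transitions enabled at $s$ is a dependence-covering set in $s$ iff for every non-empty transition sequence $w$ from $s$ there is a dependence-covering sequence $u=r'_1\cdots r'_m$ of $w$ from $s$ with $r'_1\in L$.
   Formalization: The valid dependence relation D is also contained in the standard dependence relation (every pair dependent under D is dependent under it), and the persistent set P is non-empty. The statement above fails without it. *)

theory Defs
  imports Main
begin

text \<open>A state is a triple (l, g, q): l partial map from threads to local states of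
  the currently executing handlers, g the global state, q the event queues.\<close>
type_synonym ('th,'ev,'l,'g) state = "('th \<Rightarrow> 'l option) \<times> 'g \<times> ('th \<Rightarrow> 'ev list)"

definition lg :: "('th,'ev,'l,'g) state \<Rightarrow> ('th \<Rightarrow> 'l option) \<times> 'g" where
  "lg s = (fst s, fst (snd s))"

definition queues :: "('th,'ev,'l,'g) state \<Rightarrow> 'th \<Rightarrow> 'ev list" where
  "queues s = snd (snd s)"

record ('s,'tr) lts =
  lts_init :: 's
  lts_R :: "'tr set"
  lts_app :: "'tr \<Rightarrow> 's \<Rightarrow> 's option"

text \<open>The system S_G of an event-driven program: in addition, the next transition
  of each thread, the thread and the handled event of each transition, and the target
  queue of post transitions (None if the transition is not a post).\<close>
record ('th,'ev,'l,'g,'tr) esys = "(('th,'ev,'l,'g) state, 'tr) lts" +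
  es_next :: "('th,'ev,'l,'g) state \<Rightarrow> 'th \<Rightarrow> 'tr option"
  es_tid :: "'tr \<Rightarrow> 'th"
  es_evt :: "'tr \<Rightarrow> 'ev"
  es_post :: "'tr \<Rightarrow> 'th option"

inductive_set reach :: "('s,'tr,'z) lts_scheme \<Rightarrow> 's set" for T where
  init: "lts_init T \<in> reach T"
| step: "s \<in> reach T \<Longrightarrow> r \<in> lts_R T \<Longrightarrow> lts_app T r s = Some s' \<Longrightarrow> s' \<in> reach T"

fun run :: "('s,'tr,'z) lts_scheme \<Rightarrow> 'tr list \<Rightarrow> 's \<Rightarrow> 's option" where
  "run T [] s = Some s"
| "run T (r # w) s = (if r \<in> lts_R T then
      (case lts_app T r s of None \<Rightarrow> None | Some s' \<Rightarrow> run T w s') else None)"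

definition enabled :: "('s,'tr,'z) lts_scheme \<Rightarrow> 'tr \<Rightarrow> 's \<Rightarrow> bool" where
  "enabled T r s \<longleftrightarrow> r \<in> lts_R T \<and> lts_app T r s \<noteq> None"

definition nextTrans :: "('th,'ev,'l,'g,'tr,'z) esys_scheme \<Rightarrow> ('th,'ev,'l,'g) state \<Rightarrow> 'tr set" where
  "nextTrans G s = {r. \<exists>t. es_next G s t = Some r}"

definition may_reorder :: "('th,'ev,'l,'g,'tr,'z) esys_scheme \<Rightarrow> 'th \<Rightarrow> 'ev \<Rightarrow> 'ev \<Rightarrow> bool" where
  "may_reorder G t e e' \<longleftrightarrow>
     (\<exists>s s' w w' v v'. s \<in> reach G \<and> s' \<in> reach G \<and>
        queues s t = e # w @ e' # w' \<and> queues s' t = e' # v @ e # v')"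

definition std_dep :: "('th,'ev,'l,'g,'tr,'z) esys_scheme \<Rightarrow> ('tr \<times> 'tr) set \<Rightarrow> bool" where
  "std_dep G Dstd \<longleftrightarrow>
     Dstd \<subseteq> lts_R G \<times> lts_R G \<and> refl_on (lts_R G) Dstd \<and> sym Dstd \<and>
     (\<forall>r1\<in>lts_R G. \<forall>r2\<in>lts_R G. (r1, r2) \<notin> Dstd \<longrightarrow>
        (\<forall>s\<in>reach G.
          (enabled G r1 s \<longrightarrow> (enabled G r2 s \<longleftrightarrow> enabled G r2 (the (lts_app G r1 s)))) \<and>
          (enabled G r1 s \<and> enabled G r2 s \<longrightarrow> run G [r2, r1] s = run G [r1, r2] s))) \<and>
     (\<forall>r1\<in>lts_R G. \<forall>r2\<in>lts_R G.
        es_post G r1 \<noteq> None \<and> es_post G r1 = es_post G r2 \<longrightarrow> (r1, r2) \<in> Dstd)"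

definition valid_ep_dep ::
  "(('pth,'ev,'l,'g) state, 'ptr, 'z) lts_scheme \<Rightarrow> ('ptr \<times> 'ptr) set \<Rightarrow> bool" where
  "valid_ep_dep PG DP \<longleftrightarrow>
     DP \<subseteq> lts_R PG \<times> lts_R PG \<and> refl_on (lts_R PG) DP \<and> sym DP \<and>
     (\<forall>r1\<in>lts_R PG. \<forall>r2\<in>lts_R PG. (r1, r2) \<notin> DP \<longrightarrow>
        (\<forall>s\<in>reach PG.
          (enabled PG r1 s \<longrightarrow> (enabled PG r2 s \<longleftrightarrow> enabled PG r2 (the (lts_app PG r1 s)))) \<and>
          (enabled PG r1 s \<and> enabled PG r2 s \<longrightarrow>
             run PG [r2, r1] s \<noteq> None \<and> run PG [r1, r2] s \<noteq> None \<and>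
             lg (the (run PG [r2, r1] s)) = lg (the (run PG [r1, r2] s)))))"

definition valid_dep ::
  "('th,'ev,'l,'g,'tr,'z) esys_scheme \<Rightarrow> (('pth,'ev,'l,'g) state, 'ptr, 'y) lts_scheme \<Rightarrow>
   ('tr \<Rightarrow> 'ptr) \<Rightarrow> ('tr \<times> 'tr) set \<Rightarrow> bool" where
  "valid_dep G PG ep D \<longleftrightarrow>
     D \<subseteq> lts_R G \<times> lts_R G \<and> refl_on (lts_R G) D \<and> sym D \<and>
     (\<exists>DP. valid_ep_dep PG DP \<and>
       (\<forall>r1\<in>lts_R G. \<forall>r2\<in>lts_R G. (r1, r2) \<notin> D \<longrightarrow>
          (if es_tid G r1 = es_tid G r2 \<and> es_evt G r1 \<noteq> es_evt G r2
           then may_reorder G (es_tid G r1) (es_evt G r1) (es_evt G r2) \<and> (ep r1, ep r2) \<notin> DP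
           else (\<forall>s\<in>reach G.
             (enabled G r1 s \<longrightarrow> (enabled G r2 s \<longleftrightarrow> enabled G r2 (the (lts_app G r1 s)))) \<and>
             (enabled G r1 s \<and> enabled G r2 s \<longrightarrow>
                run G [r2, r1] s \<noteq> None \<and> run G [r1, r2] s \<noteq> None \<and>
                lg (the (run G [r2, r1] s)) = lg (the (run G [r1, r2] s)))))))"

definition persistent ::
  "('th,'ev,'l,'g,'tr,'z) esys_scheme \<Rightarrow> ('tr \<times> 'tr) set \<Rightarrow> 'tr set \<Rightarrow> ('th,'ev,'l,'g) state \<Rightarrow> bool" where
  "persistent G Dstd P s \<longleftrightarrow>
     (\<forall>r\<in>P. enabled G r s) \<and>
     (\<forall>w. w \<noteq> [] \<longrightarrow> run G w s \<noteq> None \<longrightarrow> set w \<inter> P = {} \<longrightarrow>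
        (\<forall>p\<in>P. (last w, p) \<notin> Dstd))"

definition dep_cov_seq ::
  "('th,'ev,'l,'g,'tr,'z) esys_scheme \<Rightarrow> ('tr \<times> 'tr) set \<Rightarrow> ('th,'ev,'l,'g) state \<Rightarrow>
   'tr list \<Rightarrow> 'tr list \<Rightarrow> bool" where
  "dep_cov_seq G D s w u \<longleftrightarrow>
     (\<exists>sn sm. run G w s = Some sn \<and> run G u s = Some sm \<and> set w \<subseteq> set u \<and>
       (\<forall>i j. i < j \<and> j < length u \<and> (u ! i, u ! j) \<in> D \<longrightarrow>
          (\<exists>i' j'. i' < j' \<and> j' < length w \<and> w ! i' = u ! i \<and> w ! j' = u ! j)
        \<or> (u ! i \<in> set w \<and> u ! j \<in> nextTrans G sn)
        \<or> (u ! i \<notin> set w \<and> u ! j \<in> nextTrans G sn \<and>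
             (\<exists>v1 v2. run G (w @ v1 @ [u ! i] @ v2 @ [u ! j]) s \<noteq> None))
        \<or> (u ! j \<notin> set w \<union> nextTrans G sn)))"

definition dep_cov_set ::
  "('th,'ev,'l,'g,'tr,'z) esys_scheme \<Rightarrow> ('tr \<times> 'tr) set \<Rightarrow> 'tr set \<Rightarrow> ('th,'ev,'l,'g) state \<Rightarrow> bool" where
  "dep_cov_set G D L s \<longleftrightarrow>
     L \<noteq> {} \<and> (\<forall>r\<in>L. enabled G r s) \<and>
     (\<forall>w. w \<noteq> [] \<longrightarrow> run G w s \<noteq> None \<longrightarrow>
        (\<exists>u. u \<noteq> [] \<and> dep_cov_seq G D s w u \<and> hd u \<in> L))"

end

theory Submission
  imports Defs
begin

lemma run_append:
  "run T (a @ b) s = (case run T a s of None \<Rightarrow> None | Some s' \<Rightarrow> run T b s')"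
  by (induction a arbitrary: s) (auto split: option.splits)

lemma run_reach:
  "s \<in> reach T \<Longrightarrow> run T w s = Some s' \<Longrightarrow> s' \<in> reach T"
proof (induction w arbitrary: s)
  case Nil then show ?case by simp
next
  case (Cons r w)
  then show ?case by (auto split: if_splits option.splits intro: reach.step)
qed

lemma run_R: "run T w s \<noteq> None \<Longrightarrow> set w \<subseteq> lts_R T"
  by (induction w arbitrary: s) (auto split: if_splits option.splits)

lemma run_take: "run T w s \<noteq> None \<Longrightarrow> run T (take n w) s \<noteq> None"
  using run_append[of T "take n w" "drop n w" s]
  by (auto split: option.splits)

lemma commute:
  assumes sd: "std_dep G Dstd"
  shows "s \<in> reach G \<Longrightarrow> p \<in> lts_R G \<Longrightarrow> enabled G p s \<Longrightarrow>
    (\<forall>x\<in>set w1. (x, p) \<notin> Dstd) \<Longrightarrow> run G w1 s \<noteq> None \<Longrightarrow>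
    run G (p # w1) s = run G (w1 @ [p]) s \<and> run G (w1 @ [p]) s \<noteq> None"
proof (induction w1 arbitrary: s)
  case Nil
  then show ?case by (auto simp: enabled_def split: option.splits)
next
  case (Cons x w1)
  from Cons.prems have xR: "x \<in> lts_R G" by (auto split: if_splits)
  from Cons.prems obtain s' where s': "lts_app G x s = Some s'" and rw: "run G w1 s' \<noteq> None"
    using xR by (auto split: option.splits)
  have ind: "(x, p) \<notin> Dstd" using Cons.prems by auto
  have exs: "enabled G x s" using xR s' by (simp add: enabled_def)
  have C: "(enabled G x s \<longrightarrow> (enabled G p s \<longleftrightarrow> enabled G p (the (lts_app G x s)))) \<and>
          (enabled G x s \<and> enabled G p s \<longrightarrow> run G [p, x] s = run G [x, p] s)"
    using sd ind xR Cons.prems(1,2) unfolding std_dep_def by blast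
  have ep': "enabled G p s'" using C exs Cons.prems(3) s' by simp
  have s'r: "s' \<in> reach G" using Cons.prems(1) xR s' by (rule reach.step)
  have IH: "run G (p # w1) s' = run G (w1 @ [p]) s' \<and> run G (w1 @ [p]) s' \<noteq> None"
    using Cons.IH[OF s'r Cons.prems(2) ep'] Cons.prems(4) rw by auto
  obtain t where t: "lts_app G p s' = Some t" using ep' by (auto simp: enabled_def)
  have sw: "run G [p, x] s = Some t" using C exs Cons.prems(3) s' t xR Cons.prems(2) by simp
  obtain sp where sp: "lts_app G p s = Some sp" using Cons.prems(3) by (auto simp: enabled_def)
  have xsp: "lts_app G x sp = Some t" using sw sp xR Cons.prems(2)
    by (auto split: option.splits if_splits)
  have "run G (p # x # w1) s = run G w1 t" using sp xsp xR Cons.prems(2) by simp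
  also have "\<dots> = run G (p # w1) s'" using t Cons.prems(2) by simp
  also have "\<dots> = run G ((x # w1) @ [p]) s" using IH s' xR by simp
  finally show ?case using IH s' xR by simp
qed

lemma cover:
  assumes rw: "run G w s = Some sn" and ru: "run G u s = Some sm"
    and u: "u = p # w1 @ w2" and w: "w = w1 @ m @ w2"
    and m: "m = [p] \<or> (m = [] \<and> w2 = [])"
    and ind: "\<forall>x\<in>set w1. (p, x) \<notin> D"
  shows "dep_cov_seq G D s w u"
proof -
  define g where "g k = (if k \<le> length w1 then k - 1 else k - 1 + length m)" for k
  have gu: "w ! g k = u ! k" if "1 \<le> k" "k < length u" for k
  proof (cases "k \<le> length w1")
    case True
    then show ?thesis using that u w m by (auto simp: g_def nth_append nth_Cons')
  next
    case False
    then show ?thesis using that u w m by (auto simp: g_def nth_append nth_Cons')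
  qed
  have gl: "g k < length w" if "1 \<le> k" "k < length u" for k
    using that u w m by (auto simp: g_def)
  have gm: "g i < g j" if "1 \<le> i" "i < j" for i j
    using that by (auto simp: g_def)
  have sub: "set w \<subseteq> set u" using u w m by auto
  have main: "\<forall>i j. i < j \<and> j < length u \<and> (u ! i, u ! j) \<in> D \<longrightarrow>
     (\<exists>i' j'. i' < j' \<and> j' < length w \<and> w ! i' = u ! i \<and> w ! j' = u ! j)"
  proof (intro allI impI)
    fix i j assume a: "i < j \<and> j < length u \<and> (u ! i, u ! j) \<in> D"
    show "\<exists>i' j'. i' < j' \<and> j' < length w \<and> w ! i' = u ! i \<and> w ! j' = u ! j"
    proof (cases "i = 0")
      case False
      then have "g i < g j \<and> g j < length w \<and> w ! g i = u ! i \<and> w ! g j = u ! j"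
        using a gu gl gm by auto
      then show ?thesis by blast
    next
      case True
      have ui: "u ! i = p" using True u by simp
      show ?thesis
      proof (cases "j \<le> length w1")
        case True
        then have "u ! j \<in> set w1" using a u by (auto simp: nth_Cons' nth_append)
        then show ?thesis using ui a ind by auto
      next
        case False
        then have m1: "m = [p]" using m a u by auto
        have gj: "g j = j" using False m1 by (simp add: g_def)
        have j1: "1 \<le> j" "j < length u" using False a by auto
        have "length w1 < g j \<and> g j < length w \<and> w ! length w1 = u ! i \<and> w ! g j = u ! j"
          using gj False gu[OF j1] gl[OF j1] ui w m1 by (auto simp: nth_append)
        then show ?thesis by blast
      qed
    qed
  qed
  show ?thesis unfolding dep_cov_seq_def using rw ru sub main by blast
qed

theorem theorem2:
  fixes G :: "('th::finite,'ev,'l,'g,'tr) esys"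
    and PG :: "(('pth,'ev,'l,'g) state, 'ptr) lts"
    and ep :: "'tr \<Rightarrow> 'ptr"
    and Dstd D :: "('tr \<times> 'tr) set"
    and P :: "'tr set"
    and s :: "('th,'ev,'l,'g) state"
  assumes "s \<in> reach G"
    and "std_dep G Dstd"
    and "valid_dep G PG ep D"
    and "D \<subseteq> Dstd"
    and "P \<noteq> {}"
    and "persistent G Dstd P s"
  shows "dep_cov_set G D P s"
proof -
  have symD: "sym D" using assms(3) by (simp add: valid_dep_def)
  have penab: "\<forall>r\<in>P. enabled G r s" using assms(6) by (simp add: persistent_def)
  have indep: "(x, p) \<notin> Dstd \<and> (p, x) \<notin> D"
    if h: "run G w1 s \<noteq> None" "set w1 \<inter> P = {}" "x \<in> set w1" "p \<in> P" for w1 x p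
  proof -
    obtain k where k: "k < length w1" "w1 ! k = x" using h(3) by (auto simp: in_set_conv_nth)
    let ?v = "take (Suc k) w1"
    have "?v \<noteq> []" using k by (cases w1) auto
    moreover have "run G ?v s \<noteq> None" using run_take[OF h(1)] by blast
    moreover have "set ?v \<inter> P = {}" using h(2) set_take_subset[of "Suc k" w1] by blast
    moreover have "last ?v = x" using k by (simp add: take_Suc_conv_app_nth)
    ultimately have "(x, p) \<notin> Dstd" using assms(6) h(4) unfolding persistent_def by metis
    moreover have "(p, x) \<notin> D" using calculation assms(4) symD unfolding sym_def by blast
    ultimately show ?thesis by blast
  qed
  show ?thesis unfolding dep_cov_set_def
  proof (intro conjI allI impI)
    show "P \<noteq> {}" by fact
    show "\<forall>r\<in>P. enabled G r s" by fact
  next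
    fix w :: "'tr list" assume wne: "w \<noteq> []" and rw: "run G w s \<noteq> None"
    then obtain sn where sn: "run G w s = Some sn" by auto
    show "\<exists>u. u \<noteq> [] \<and> dep_cov_seq G D s w u \<and> hd u \<in> P"
    proof (cases "\<exists>x\<in>set w. x \<in> P")
      case True
      then obtain w1 p w2 where wd: "w = w1 @ p # w2" and pP: "p \<in> P"
        and dis: "\<forall>y\<in>set w1. y \<notin> P"
        using split_list_first_prop[OF True] by blast
      have rw1: "run G w1 s \<noteq> None" using rw wd run_take[of G w s "length w1"] by simp
      have dis': "set w1 \<inter> P = {}" using dis by auto
      have pR: "p \<in> lts_R G" using penab pP by (simp add: enabled_def)
      have c: "run G (p # w1) s = run G (w1 @ [p]) s"
        using commute[OF assms(2) assms(1) pR] penab pP indep[OF rw1 dis' _ pP] rw1 by blast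
      have "run G (p # w1 @ w2) s = run G w s"
        using c run_append[of G "p # w1" w2 s] run_append[of G "w1 @ [p]" w2 s] wd by simp
      then obtain sm where sm: "run G (p # w1 @ w2) s = Some sm" using sn by simp
      have "dep_cov_seq G D s w (p # w1 @ w2)"
        by (rule cover[OF sn sm refl, where m="[p]" and D=D]) (use wd indep[OF rw1 dis' _ pP] in auto)
      then show ?thesis using pP by auto
    next
      case False
      obtain p where pP: "p \<in> P" using assms(5) by auto
      have dis': "set w \<inter> P = {}" using False by auto
      have pR: "p \<in> lts_R G" using penab pP by (simp add: enabled_def)
      have c: "run G (p # w) s = run G (w @ [p]) s \<and> run G (w @ [p]) s \<noteq> None"
        using commute[OF assms(2) assms(1) pR] penab pP indep[OF rw dis' _ pP] rw by blast
      then obtain sm where sm: "run G (p # w @ []) s = Some sm" by auto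
      have "dep_cov_seq G D s w (p # w @ [])"
        by (rule cover[OF sn sm refl, where m="[]" and D=D]) (use indep[OF rw dis' _ pP] in auto)
      then show ?thesis using pP by auto
    qed
  qed
qed

end
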